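(* Let $k\ge1$. The logic $\mathbb{L}_k^{\le}$ is a logic of formal undeterminedness with respect to $\sim$ and $\circ$: (a) $\not\models_k^{\le}p\vee\sim p$ for a propositional variable $p$ (so $\mathbb{L}_k^{\le}$ is paracomplete); (b) for a propositional variable $p$, $\circ p\not\models_k^{\le}p$ and $\circ p\not\models_k^{\le}\sim p$; (c) $\circ\alpha\models_k^{\le}\alpha\vee\sim\alpha$ for every formula $\alpha$.
   Context: A modal pseudocomplemented De Morgan algebra ($mpM$-algebra) is an algebra $\langle A,\wedge,\vee,\sim,{}^\ast,0,1\rangle$ such that $\langle A,\wedge,\vee,\sim,0,1\rangle$ is a De Morgan algebra (bounded distributive lattice with $\sim\sim x=x$, $\sim(x\vee y)=\sim x\wedge\sim y$), $x^\ast$ is the pseudocomplement of $x$, and $x\vee\sim x\le x\vee x^\ast$. A $\mathcal{C}_k$-algebra ($k\ge1$) is a pair $(A,t)$ with $A$ an $mpM$-algebra and $t$ an $mpM$-automorphism of $A$ with $t^k=\mathrm{id}$. $Fm$ is the set of formulas built from a denumerable set of variables with connectives $\wedge,\vee$ (binary), $\sim,{}^\ast,t$ (unary), $\top,\bot$ (constants); a valuation into a $\mathcal{C}_k$-algebra $(A,t)$ is a homomorphism $v:Fm\to(A,t)$ (with $v(\top)=1$, $v(\bot)=0$). The degree-preserving logic $\mathbb{L}_k^{\le}=\langle Fm,\models_k^{\le}\rangle$: for nonempty finite $\{\alpha_1,\dots,\alpha_n\}$, $\alpha_1,\dots,\alpha_n\models_k^{\le}\alpha$ iff for every $\mathcal{C}_k$-algebra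 $(A,t)$, every valuation $v$ and every $a\in A$, if $v(\alpha_i)\ge a$ for all $i$ then $v(\alpha)\ge a$; $\emptyset\models_k^{\le}\alpha$ iff $v(\alpha)=1$ for all $(A,t)$ and $v$; for infinite $\Gamma$, $\Gamma\models_k^{\le}\alpha$ iff some finite nonempty subset of $\Gamma$ entails $\alpha$. The consistency operator is $\circ\alpha=\bigwedge_{i=0}^{k}t^i\big((\sim\alpha\vee\alpha)\wedge(\alpha\wedge\sim\alpha)^\ast\big)$. *)

theory Defs
  imports Main
begin

record 'a cka =
  carrier :: "'a set"
  meet :: "'a \<Rightarrow> 'a \<Rightarrow> 'a"
  join :: "'a \<Rightarrow> 'a \<Rightarrow> 'a"
  neg  :: "'a \<Rightarrow> 'a"
  pc   :: "'a \<Rightarrow> 'a"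
  zero :: "'a"
  one  :: "'a"
  tau  :: "'a \<Rightarrow> 'a"

definition leq :: "'a cka \<Rightarrow> 'a \<Rightarrow> 'a \<Rightarrow> bool" where
  "leq C x y \<longleftrightarrow> meet C x y = x"

definition bdl :: "'a cka \<Rightarrow> bool" where
  "bdl C \<longleftrightarrow>
     zero C \<in> carrier C \<and> one C \<in> carrier C \<and>
     (\<forall>x\<in>carrier C. \<forall>y\<in>carrier C. meet C x y \<in> carrier C \<and> join C x y \<in> carrier C) \<and>
     (\<forall>x\<in>carrier C. \<forall>y\<in>carrier C. \<forall>z\<in>carrier C.
        meet C (meet C x y) z = meet C x (meet C y z) \<and>
        join C (join C x y) z = join C x (join C y z) \<and>
        meet C x (join C y z) = join C (meet C x y) (meet C x z)) \<and>
     (\<forall>x\<in>carrier C. \<forall>y\<in>carrier C.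
        meet C x y = meet C y x \<and> join C x y = join C y x \<and>
        meet C x (join C x y) = x \<and> join C x (meet C x y) = x) \<and>
     (\<forall>x\<in>carrier C. join C x (zero C) = x \<and> meet C x (one C) = x)"

definition de_morgan :: "'a cka \<Rightarrow> bool" where
  "de_morgan C \<longleftrightarrow> bdl C \<and>
     (\<forall>x\<in>carrier C. neg C x \<in> carrier C \<and> neg C (neg C x) = x) \<and>
     (\<forall>x\<in>carrier C. \<forall>y\<in>carrier C. neg C (join C x y) = meet C (neg C x) (neg C y))"

definition mpM :: "'a cka \<Rightarrow> bool" where
  "mpM C \<longleftrightarrow> de_morgan C \<and>
     (\<forall>x\<in>carrier C. pc C x \<in> carrier C \<and> meet C x (pc C x) = zero C \<and>
        (\<forall>y\<in>carrier C. meet C x y = zero C \<longrightarrow> leq C y (pc C x))) \<and>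
     (\<forall>x\<in>carrier C. leq C (join C x (neg C x)) (join C x (pc C x)))"

definition Ck_alg :: "nat \<Rightarrow> 'a cka \<Rightarrow> bool" where
  "Ck_alg k C \<longleftrightarrow> mpM C \<and>
     bij_betw (tau C) (carrier C) (carrier C) \<and>
     (\<forall>x\<in>carrier C. \<forall>y\<in>carrier C.
        tau C (meet C x y) = meet C (tau C x) (tau C y) \<and>
        tau C (join C x y) = join C (tau C x) (tau C y)) \<and>
     (\<forall>x\<in>carrier C. tau C (neg C x) = neg C (tau C x) \<and> tau C (pc C x) = pc C (tau C x)) \<and>
     tau C (zero C) = zero C \<and> tau C (one C) = one C \<and>
     (\<forall>x\<in>carrier C. (tau C ^^ k) x = x)"

datatype fm = Var nat | And fm fm | Or fm fm | Neg fm | Star fm | T fm | Top | Bot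

text \<open>A valuation (homomorphism Fm \<rightarrow> (A,t)) is determined by its values on variables.\<close>
primrec eval :: "'a cka \<Rightarrow> (nat \<Rightarrow> 'a) \<Rightarrow> fm \<Rightarrow> 'a" where
  "eval C v (Var n) = v n"
| "eval C v (And a b) = meet C (eval C v a) (eval C v b)"
| "eval C v (Or a b) = join C (eval C v a) (eval C v b)"
| "eval C v (Neg a) = neg C (eval C v a)"
| "eval C v (Star a) = pc C (eval C v a)"
| "eval C v (T a) = tau C (eval C v a)"
| "eval C v Top = one C"
| "eval C v Bot = zero C"

definition valuation :: "'a cka \<Rightarrow> (nat \<Rightarrow> 'a) \<Rightarrow> bool" where
  "valuation C v \<longleftrightarrow> (\<forall>n. v n \<in> carrier C)"

section \<open>Degree-preserving consequence, relative to algebras on carrier type 'a\<close>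

definition ent_fin :: "nat \<Rightarrow> 'a itself \<Rightarrow> fm set \<Rightarrow> fm \<Rightarrow> bool" where
  "ent_fin k _ \<Gamma> \<alpha> \<longleftrightarrow>
     (\<forall>(C::'a cka) v. Ck_alg k C \<longrightarrow> valuation C v \<longrightarrow>
        (\<forall>a\<in>carrier C. (\<forall>\<beta>\<in>\<Gamma>. leq C a (eval C v \<beta>)) \<longrightarrow> leq C a (eval C v \<alpha>)))"

definition ent :: "nat \<Rightarrow> 'a itself \<Rightarrow> fm set \<Rightarrow> fm \<Rightarrow> bool" where
  "ent k ty \<Gamma> \<alpha> \<longleftrightarrow>
     (if \<Gamma> = {} then
        (\<forall>(C::'a cka) v. Ck_alg k C \<longrightarrow> valuation C v \<longrightarrow> eval C v \<alpha> = one C)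
      else if finite \<Gamma> then ent_fin k ty \<Gamma> \<alpha>
      else (\<exists>\<Delta>\<subseteq>\<Gamma>. finite \<Delta> \<and> \<Delta> \<noteq> {} \<and> ent_fin k ty \<Delta> \<alpha>))"

definition tpow :: "nat \<Rightarrow> fm \<Rightarrow> fm" where
  "tpow i \<phi> = (T ^^ i) \<phi>"

primrec bigconj_t :: "nat \<Rightarrow> fm \<Rightarrow> fm" where
  "bigconj_t 0 \<phi> = tpow 0 \<phi>"
| "bigconj_t (Suc n) \<phi> = And (bigconj_t n \<phi>) (tpow (Suc n) \<phi>)"

definition circ :: "nat \<Rightarrow> fm \<Rightarrow> fm" where
  "circ k \<alpha> = bigconj_t k (And (Or (Neg \<alpha>) \<alpha>) (Star (And \<alpha> (Neg \<alpha>))))"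

end

theory Submission
  imports Defs
begin

definition C3 :: "nat cka" where
  "C3 = \<lparr>carrier = {0,1,2}, meet = min, join = max, neg = (\<lambda>x. 2 - x),
         pc = (\<lambda>x. if x = 0 then 2 else 0), zero = 0, one = 2, tau = id\<rparr>"

lemma C3_alg: "Ck_alg k C3"
  unfolding Ck_alg_def mpM_def de_morgan_def bdl_def leq_def C3_def
  by (auto simp: id_funpow)

lemma C3_val: "v p \<in> {0,1,2} \<Longrightarrow> valuation C3 (\<lambda>_. v p)"
  by (simp add: valuation_def C3_def)

lemma eval_carrier:
  assumes "Ck_alg k C" "valuation C v"
  shows "eval C v \<phi> \<in> carrier C"
proof -
  have m: "mpM C" and b: "bij_betw (tau C) (carrier C) (carrier C)"
    using assms(1) by (auto simp: Ck_alg_def)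
  have d: "de_morgan C" and bd: "bdl C" using m by (auto simp: mpM_def de_morgan_def)
  show ?thesis
    by (induction \<phi>) (use assms(2) m d bd b in
        \<open>auto simp: valuation_def mpM_def de_morgan_def bdl_def bij_betw_def\<close>)
qed

lemma leq_meet:
  assumes "bdl C" "a \<in> carrier C" "x \<in> carrier C" "y \<in> carrier C"
    "leq C a (meet C x y)"
  shows "leq C a x"
proof -
  have idem: "meet C x x = x"
    using assms(1,3) unfolding bdl_def by metis
  have e: "meet C a (meet C x y) = a" using assms(5) by (simp add: leq_def)
  have "meet C a x = meet C (meet C a (meet C x y)) x" using e by simp
  also have "\<dots> = meet C a (meet C (meet C x y) x)"
    using assms unfolding bdl_def by blast
  also have "meet C (meet C x y) x = meet C x (meet C x y)"
    using assms unfolding bdl_def by blast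
  also have "\<dots> = meet C x y" using assms idem unfolding bdl_def by metis
  finally show ?thesis using e by (simp add: leq_def)
qed

lemma bigconj_leq:
  assumes "Ck_alg k C" "valuation C v" "a \<in> carrier C"
    "leq C a (eval C v (bigconj_t n \<phi>))"
  shows "leq C a (eval C v \<phi>)"
  using assms(4)
proof (induction n)
  case 0
  then show ?case by (simp add: tpow_def)
next
  case (Suc n)
  have bd: "bdl C" using assms(1) by (simp add: Ck_alg_def mpM_def de_morgan_def)
  show ?case
    apply (rule Suc.IH)
    apply (rule leq_meet[OF bd assms(3)])
    using Suc.prems eval_carrier[OF assms(1,2)] by auto
qed

lemma partc: "ent k TYPE('a) {circ k \<alpha>} (Or \<alpha> (Neg \<alpha>))"
  unfolding ent_def ent_fin_def
proof (simp, intro allI impI ballI)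
  fix C :: "'a cka" and v a
  assume A: "Ck_alg k C" "valuation C v" "a \<in> carrier C"
    "leq C a (eval C v (circ k \<alpha>))"
  have bd: "bdl C" using A(1) by (simp add: Ck_alg_def mpM_def de_morgan_def)
  note ec = eval_carrier[OF A(1,2)]
  have "leq C a (eval C v (And (Or (Neg \<alpha>) \<alpha>) (Star (And \<alpha> (Neg \<alpha>)))))"
    by (rule bigconj_leq[OF A(1,2,3)]) (use A(4) in \<open>simp add: circ_def\<close>)
  hence "leq C a (eval C v (Or (Neg \<alpha>) \<alpha>))"
    using leq_meet[OF bd A(3)] ec by (metis eval.simps(2))
  moreover have "eval C v (Or (Neg \<alpha>) \<alpha>) = eval C v (Or \<alpha> (Neg \<alpha>))"
    using bd ec unfolding bdl_def by (metis eval.simps(3))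
  ultimately show "leq C a (join C (eval C v \<alpha>) (neg C (eval C v \<alpha>)))" by simp
qed

lemma tpow_C3: "eval C3 v ((T ^^ i) \<phi>) = eval C3 v \<phi>"
  by (induction i) (simp_all add: C3_def)

lemma circ_val: "eval C3 v (bigconj_t n \<phi>) = eval C3 v \<phi>"
  by (induction n) (simp_all add: tpow_def tpow_C3, simp add: C3_def)

theorem lemma6p5:
  fixes k p :: nat and \<alpha> :: fm
  assumes "k \<ge> 1"
  shows "\<not> ent k TYPE(nat) {} (Or (Var p) (Neg (Var p)))
       \<and> \<not> ent k TYPE(nat) {circ k (Var p)} (Var p)
       \<and> \<not> ent k TYPE(nat) {circ k (Var p)} (Neg (Var p))
       \<and> ent k TYPE('a) {circ k \<alpha>} (Or \<alpha> (Neg \<alpha>))"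
proof (intro conjI partc)
  show "\<not> ent k TYPE(nat) {} (Or (Var p) (Neg (Var p)))"
    unfolding ent_def
    apply simp
    apply (rule exI[of _ C3])
    apply (rule conjI[OF C3_alg])
    apply (rule exI[of _ "\<lambda>_. 1"])
    by (simp add: valuation_def C3_def)
  show "\<not> ent k TYPE(nat) {circ k (Var p)} (Var p)"
    unfolding ent_def ent_fin_def
    apply simp
    apply (rule exI[of _ C3])
    apply (rule conjI[OF C3_alg])
    apply (rule exI[of _ "\<lambda>_. 0"])
    apply (rule conjI, simp add: valuation_def C3_def)
    apply (rule bexI[of _ 2])
    by (simp_all add: circ_def circ_val leq_def, simp_all add: C3_def)
  show "\<not> ent k TYPE(nat) {circ k (Var p)} (Neg (Var p))"
    unfolding ent_def ent_fin_def
    apply simp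
    apply (rule exI[of _ C3])
    apply (rule conjI[OF C3_alg])
    apply (rule exI[of _ "\<lambda>_. 2"])
    apply (rule conjI, simp add: valuation_def C3_def)
    apply (rule bexI[of _ 2])
    by (simp_all add: circ_def circ_val leq_def, simp_all add: C3_def)
qed

end
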